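(* Let $n\geq 1$ and let $c$ be the center of the star $K_{1,n}$ (the vertex of degree $n$; either vertex if $n=1$). Then $\uparrow^{2}K_{1,n}$ has Laplacian perfect state transfer between the vertices $(0,c)$ and $(1,c)$ (which have degree $2n$) if and only if $n$ is odd.
   Context: All graphs are simple, undirected and unweighted. $K_{1,n}$ is the star with one center adjacent to $n$ leaves. The blow-up $\uparrow^{2}G$ has vertex set $\mathbb{Z}_2\times V(G)$, with $(l,a)\sim(m,b)$ iff $a\sim b$ in $G$. A graph with Laplacian $L=D-A$ has Laplacian perfect state transfer between $a,b$ if $\exp(i\tau L)\mathbf{e}_a=\gamma\mathbf{e}_b$ for some $\tau>0$, $\gamma\in\mathbb{C}$. *)

theory Defs
  imports Complex_Main
begin

(* A finite simple graph is given by a vertex set V and a symmetric irreflexive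
   adjacency relation E (only its restriction to V matters).
   Matrices indexed by V are functions 'v => 'v => complex. *)

definition mat_mult :: "'v set \<Rightarrow> ('v \<Rightarrow> 'v \<Rightarrow> complex) \<Rightarrow> ('v \<Rightarrow> 'v \<Rightarrow> complex) \<Rightarrow> 'v \<Rightarrow> 'v \<Rightarrow> complex" where
  "mat_mult V A B = (\<lambda>u v. \<Sum>w\<in>V. A u w * B w v)"

definition mat_id :: "'v \<Rightarrow> 'v \<Rightarrow> complex" where
  "mat_id = (\<lambda>u v. if u = v then 1 else 0)"

fun mat_pow :: "'v set \<Rightarrow> ('v \<Rightarrow> 'v \<Rightarrow> complex) \<Rightarrow> nat \<Rightarrow> 'v \<Rightarrow> 'v \<Rightarrow> complex" where
  "mat_pow V A 0 = mat_id"
| "mat_pow V A (Suc k) = mat_mult V A (mat_pow V A k)"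

definition mat_exp :: "'v set \<Rightarrow> ('v \<Rightarrow> 'v \<Rightarrow> complex) \<Rightarrow> 'v \<Rightarrow> 'v \<Rightarrow> complex" where
  "mat_exp V A = (\<lambda>u v. \<Sum>k. mat_pow V A k u v / of_nat (fact k))"

definition degree :: "'v set \<Rightarrow> ('v \<Rightarrow> 'v \<Rightarrow> bool) \<Rightarrow> 'v \<Rightarrow> nat" where
  "degree V E u = card {w\<in>V. E u w}"

definition laplacian :: "'v set \<Rightarrow> ('v \<Rightarrow> 'v \<Rightarrow> bool) \<Rightarrow> 'v \<Rightarrow> 'v \<Rightarrow> complex" where
  "laplacian V E = (\<lambda>u v. (if u = v then of_nat (degree V E u) else 0) - (if E u v then 1 else 0))"

definition lap_pst :: "'v set \<Rightarrow> ('v \<Rightarrow> 'v \<Rightarrow> bool) \<Rightarrow> 'v \<Rightarrow> 'v \<Rightarrow> bool" where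
  "lap_pst V E a b \<longleftrightarrow>
     (\<exists>\<tau>::real. \<tau> > 0 \<and> (\<exists>\<gamma>::complex. \<forall>u\<in>V.
        mat_exp V (\<lambda>x y. \<i> * of_real \<tau> * laplacian V E x y) u a = \<gamma> * (if u = b then 1 else 0)))"

(* star K_{1,n}: vertices 0..n, center 0, leaves 1..n *)
definition star_verts :: "nat \<Rightarrow> nat set" where
  "star_verts n = {0..n}"

definition star_adj :: "nat \<Rightarrow> nat \<Rightarrow> nat \<Rightarrow> bool" where
  "star_adj n a b \<longleftrightarrow> a \<le> n \<and> b \<le> n \<and> ((a = 0 \<and> b \<noteq> 0) \<or> (b = 0 \<and> a \<noteq> 0))"

definition blowup2_verts :: "'v set \<Rightarrow> (nat \<times> 'v) set" where
  "blowup2_verts V = {0, 1} \<times> V"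

definition blowup2_adj :: "('v \<Rightarrow> 'v \<Rightarrow> bool) \<Rightarrow> nat \<times> 'v \<Rightarrow> nat \<times> 'v \<Rightarrow> bool" where
  "blowup2_adj E x y \<longleftrightarrow> E (snd x) (snd y)"

end

theory Submission
  imports Defs
begin

definition GV :: "complex \<Rightarrow> complex \<Rightarrow> complex \<Rightarrow> nat \<times> nat \<Rightarrow> complex" where
  "GV a b c u = (if u = (0,0) then a else if u = (1,0) then b else c)"

lemma nbr_center:
  assumes "l = 0 \<or> l = 1"
  shows "{w \<in> blowup2_verts (star_verts n). blowup2_adj (star_adj n) (l,0) w} = {0,1} \<times> {1..n}"
  using assms by (auto simp: blowup2_verts_def star_verts_def blowup2_adj_def star_adj_def)

lemma nbr_leaf:
  assumes "1 \<le> j" "j \<le> n"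
  shows "{w \<in> blowup2_verts (star_verts n). blowup2_adj (star_adj n) (l,j) w} = {(0,0),(1,0)}"
  using assms by (auto simp: blowup2_verts_def star_verts_def blowup2_adj_def star_adj_def)

lemma lap_sum:
  assumes "finite V"
  shows "(\<Sum>w\<in>V. laplacian V E u w * g w) =
     (if u \<in> V then of_nat (degree V E u) * g u else 0) - (\<Sum>w\<in>{w\<in>V. E u w}. g w)"
proof -
  have "(\<Sum>w\<in>V. laplacian V E u w * g w) =
     (\<Sum>w\<in>V. (if u = w then of_nat (degree V E u) * g w else 0)) - (\<Sum>w\<in>V. (if E u w then g w else 0))"
    unfolding laplacian_def sum_subtractf[symmetric] by (rule sum.cong) (auto simp: algebra_simps)
  also have "\<dots> = (if u \<in> V then of_nat (degree V E u) * g u else 0) - (\<Sum>w\<in>{w\<in>V. E u w}. g w)"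
    using assms by (simp add: sum.inter_filter)
  finally show ?thesis .
qed

lemma lap_G:
  assumes u: "u \<in> blowup2_verts (star_verts n)"
  shows "(\<Sum>w\<in>blowup2_verts (star_verts n). laplacian (blowup2_verts (star_verts n)) (blowup2_adj (star_adj n)) u w * GV a b c w)
     = (if u = (0,0) then 2 * of_nat n * (a - c) else if u = (1,0) then 2 * of_nat n * (b - c) else 2 * c - a - b)"
proof -
  let ?V = "blowup2_verts (star_verts n)" and ?E = "blowup2_adj (star_adj n)"
  have fin: "finite ?V" by (simp add: blowup2_verts_def star_verts_def)
  obtain l j where uu: "u = (l,j)" "l = 0 \<or> l = 1" "j \<le> n"
    using u by (auto simp: blowup2_verts_def star_verts_def)
  show ?thesis
  proof (cases "j = 0")
    case True
    have N: "{w\<in>?V. ?E u w} = {0,1} \<times> {1..n}" using nbr_center[OF uu(2)] uu True by simp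
    have cardN: "card ({0::nat,1} \<times> {1..n}) = 2 * n" by (simp add: card_cartesian_product)
    have S: "(\<Sum>w\<in>{0::nat,1} \<times> {1..n}. GV a b c w) = (\<Sum>w\<in>{0::nat,1} \<times> {1..n}. c)"
      by (rule sum.cong) (auto simp: GV_def)
    have D: "degree ?V ?E u = 2 * n" unfolding degree_def N cardN ..
    show ?thesis unfolding lap_sum[OF fin] N D S using uu True u
      by (auto simp: GV_def algebra_simps)
  next
    case False
    have N: "{w\<in>?V. ?E u w} = {(0,0),(1,0)}" using nbr_leaf[of j n l] uu False by simp
    have cardN: "card {(0::nat,0::nat),(1,0)} = 2" by simp
    have D: "degree ?V ?E u = 2" unfolding degree_def N cardN ..
    show ?thesis unfolding lap_sum[OF fin] N D using uu False u
      by (auto simp: GV_def algebra_simps)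
  qed
qed

definition al :: "nat \<Rightarrow> complex \<Rightarrow> nat \<Rightarrow> complex" where
  "al n z k = (1/2)*(2*of_nat n*z)^k + 0^k/(2*(of_nat n+1)) + of_nat n/(2*(of_nat n+1))*((2*of_nat n+2)*z)^k"
definition be :: "nat \<Rightarrow> complex \<Rightarrow> nat \<Rightarrow> complex" where
  "be n z k = -(1/2)*(2*of_nat n*z)^k + 0^k/(2*(of_nat n+1)) + of_nat n/(2*(of_nat n+1))*((2*of_nat n+2)*z)^k"
definition ga :: "nat \<Rightarrow> complex \<Rightarrow> nat \<Rightarrow> complex" where
  "ga n z k = 0^k/(2*(of_nat n+1)) - 1/(2*(of_nat n+1))*((2*of_nat n+2)*z)^k"

lemma np1: "(of_nat n + 1 :: complex) \<noteq> 0"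
  by (metis of_nat_Suc of_nat_eq_0_iff Suc_neq_Zero add.commute)

lemma np2: "(2 + of_nat n * 2 :: complex) \<noteq> 0" "(of_nat n * 2 + 2 :: complex) \<noteq> 0" "(2 * (of_nat n + 1) :: complex) \<noteq> 0"
  using np1[of n] by (metis add.commute distrib_right mult.commute mult_1 mult_eq_0_iff zero_neq_numeral)+

lemma gen_al: "m + 1 \<noteq> (0::complex) \<Longrightarrow> (1/2)*((2*m*z)*P) + (0*w)/(2*(m+1)) + m/(2*(m+1))*(((2*m+2)*z)*Q)
   = z*(2*m*(((1/2)*P + w/(2*(m+1)) + m/(2*(m+1))*Q) - (w/(2*(m+1)) - 1/(2*(m+1))*Q)))"
  by (simp add: field_simps) algebra?
lemma gen_be: "m + 1 \<noteq> (0::complex) \<Longrightarrow> -(1/2)*((2*m*z)*P) + (0*w)/(2*(m+1)) + m/(2*(m+1))*(((2*m+2)*z)*Q)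
   = z*(2*m*((-(1/2)*P + w/(2*(m+1)) + m/(2*(m+1))*Q) - (w/(2*(m+1)) - 1/(2*(m+1))*Q)))"
  by (simp add: field_simps) algebra?
lemma gen_ga: "m + 1 \<noteq> (0::complex) \<Longrightarrow> (0*w)/(2*(m+1)) - 1/(2*(m+1))*(((2*m+2)*z)*Q)
   = z*(2*(w/(2*(m+1)) - 1/(2*(m+1))*Q) - ((1/2)*P + w/(2*(m+1)) + m/(2*(m+1))*Q) - (-(1/2)*P + w/(2*(m+1)) + m/(2*(m+1))*Q))"
  by (simp add: field_simps) algebra?

lemma rec_al: "al n z (Suc k) = z * (2 * of_nat n * (al n z k - ga n z k))"
  unfolding al_def ga_def power_Suc by (rule gen_al[OF np1])
lemma rec_be: "be n z (Suc k) = z * (2 * of_nat n * (be n z k - ga n z k))"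
  unfolding be_def ga_def power_Suc by (rule gen_be[OF np1])
lemma rec_ga: "ga n z (Suc k) = z * (2 * ga n z k - al n z k - be n z k)"
  unfolding al_def be_def ga_def power_Suc by (rule gen_ga[OF np1])
lemma gen_init: "m + 1 \<noteq> (0::complex) \<Longrightarrow> (1/2) + 1/(2*(m+1)) + m/(2*(m+1)) = 1"
  "m + 1 \<noteq> (0::complex) \<Longrightarrow> -(1/2) + 1/(2*(m+1)) + m/(2*(m+1)) = 0"
  "m + 1 \<noteq> (0::complex) \<Longrightarrow> 1/(2*(m+1)) - 1/(2*(m+1)) = 0"
proof -
  assume h: "m + 1 \<noteq> (0::complex)"
  have h2: "2 + m * 2 \<noteq> 0" using h by (metis add.commute distrib_right mult.commute mult_1 mult_eq_0_iff zero_neq_numeral)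
  have e: "1/(2*(m+1)) + m/(2*(m+1)) = 1/2" using h h2 by (simp add: field_simps)
  show "(1/2) + 1/(2*(m+1)) + m/(2*(m+1)) = 1" by (simp only: add.assoc e) simp
  show "-(1/2) + 1/(2*(m+1)) + m/(2*(m+1)) = 0" by (simp only: add.assoc e) simp
  show "1/(2*(m+1)) - 1/(2*(m+1)) = 0" by simp
qed
lemma init: "al n z 0 = 1" "be n z 0 = 0" "ga n z 0 = 0"
  unfolding al_def be_def ga_def power_0 mult_1_right by (rule gen_init[OF np1])+

lemma pow_col:
  assumes "u \<in> blowup2_verts (star_verts n)"
  shows "mat_pow (blowup2_verts (star_verts n)) (\<lambda>x y. z * laplacian (blowup2_verts (star_verts n)) (blowup2_adj (star_adj n)) x y) k u (0,0)
     = GV (al n z k) (be n z k) (ga n z k) u"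
  using assms
proof (induction k arbitrary: u)
  case 0
  then show ?case by (auto simp: mat_id_def GV_def init)
next
  case (Suc k)
  let ?V = "blowup2_verts (star_verts n)" and ?E = "blowup2_adj (star_adj n)"
  have "mat_pow ?V (\<lambda>x y. z * laplacian ?V ?E x y) (Suc k) u (0,0)
     = (\<Sum>w\<in>?V. z * laplacian ?V ?E u w * GV (al n z k) (be n z k) (ga n z k) w)"
    by (simp add: mat_mult_def Suc.IH cong: sum.cong)
  also have "\<dots> = z * (\<Sum>w\<in>?V. laplacian ?V ?E u w * GV (al n z k) (be n z k) (ga n z k) w)"
    by (simp add: sum_distrib_left mult.assoc)
  also have "\<dots> = GV (al n z (Suc k)) (be n z (Suc k)) (ga n z (Suc k)) u"
    unfolding lap_G[OF Suc.prems] rec_al rec_be rec_ga by (simp add: GV_def)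
  finally show ?case .
qed

lemma expser: "(\<lambda>k. w^k / of_nat (fact k)) sums (exp w :: complex)"
  using exp_converges[of w] by (simp add: scaleR_conv_of_real divide_inverse mult.commute)

lemma zser: "(\<lambda>k. 0^k / of_nat (fact k)) sums (1 :: complex)"
  using expser[of 0] by simp

definition cc :: "nat \<Rightarrow> complex" where "cc n = 1/(2*(of_nat n+1))"

lemma sum_al: "(\<lambda>k. al n z k / of_nat (fact k)) sums
   ((1/2)*exp(2*of_nat n*z) + cc n + of_nat n * cc n * exp((2*of_nat n+2)*z))"
proof -
  have "(\<lambda>k. (1/2)*((2*of_nat n*z)^k/of_nat (fact k)) + cc n*(0^k/of_nat (fact k)) + (of_nat n * cc n)*(((2*of_nat n+2)*z)^k/of_nat (fact k)))
     sums ((1/2)*exp(2*of_nat n*z) + cc n * 1 + (of_nat n * cc n) * exp((2*of_nat n+2)*z))"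
    by (intro sums_add sums_mult expser zser)
  moreover have "(\<lambda>k. al n z k / of_nat (fact k)) = (\<lambda>k. (1/2)*((2*of_nat n*z)^k/of_nat (fact k)) + cc n*(0^k/of_nat (fact k)) + (of_nat n * cc n)*(((2*of_nat n+2)*z)^k/of_nat (fact k)))"
    by (rule ext) (simp add: al_def cc_def add_divide_distrib)
  ultimately show ?thesis by simp
qed

lemma sum_be: "(\<lambda>k. be n z k / of_nat (fact k)) sums
   (-(1/2)*exp(2*of_nat n*z) + cc n + of_nat n * cc n * exp((2*of_nat n+2)*z))"
proof -
  have "(\<lambda>k. -(1/2)*((2*of_nat n*z)^k/of_nat (fact k)) + cc n*(0^k/of_nat (fact k)) + (of_nat n * cc n)*(((2*of_nat n+2)*z)^k/of_nat (fact k)))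
     sums (-(1/2)*exp(2*of_nat n*z) + cc n * 1 + (of_nat n * cc n) * exp((2*of_nat n+2)*z))"
    by (intro sums_add sums_mult expser zser)
  moreover have "(\<lambda>k. be n z k / of_nat (fact k)) = (\<lambda>k. -(1/2)*((2*of_nat n*z)^k/of_nat (fact k)) + cc n*(0^k/of_nat (fact k)) + (of_nat n * cc n)*(((2*of_nat n+2)*z)^k/of_nat (fact k)))"
    by (rule ext) (simp add: be_def cc_def add_divide_distrib diff_divide_distrib)
  ultimately show ?thesis by simp
qed

lemma sum_ga: "(\<lambda>k. ga n z k / of_nat (fact k)) sums (cc n - cc n * exp((2*of_nat n+2)*z))"
proof -
  have "(\<lambda>k. cc n*(0^k/of_nat (fact k)) - cc n*(((2*of_nat n+2)*z)^k/of_nat (fact k)))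
     sums (cc n * 1 - cc n * exp((2*of_nat n+2)*z))"
    by (intro sums_diff sums_mult expser zser)
  moreover have "(\<lambda>k. ga n z k / of_nat (fact k)) = (\<lambda>k. cc n*(0^k/of_nat (fact k)) - cc n*(((2*of_nat n+2)*z)^k/of_nat (fact k)))"
    by (rule ext) (simp add: ga_def cc_def diff_divide_distrib)
  ultimately show ?thesis by simp
qed

lemma exp_col:
  assumes "u \<in> blowup2_verts (star_verts n)"
  shows "mat_exp (blowup2_verts (star_verts n)) (\<lambda>x y. z * laplacian (blowup2_verts (star_verts n)) (blowup2_adj (star_adj n)) x y) u (0,0)
     = GV ((1/2)*exp(2*of_nat n*z) + cc n + of_nat n * cc n * exp((2*of_nat n+2)*z))
          (-(1/2)*exp(2*of_nat n*z) + cc n + of_nat n * cc n * exp((2*of_nat n+2)*z))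
          (cc n - cc n * exp((2*of_nat n+2)*z)) u"
  unfolding mat_exp_def pow_col[OF assms]
  using sums_unique[OF sum_al, symmetric] sums_unique[OF sum_be, symmetric] sums_unique[OF sum_ga, symmetric]
  by (simp add: GV_def)

lemma cc_prop: "cc n * (of_nat n + 1) = 1/2" "cc n \<noteq> 0"
proof -
  have "2 * of_nat n + 2 \<noteq> (0::complex)" by (metis add.commute np2(2) mult.commute)
  then show "cc n * (of_nat n + 1) = 1/2" "cc n \<noteq> 0" using np1[of n] by (auto simp: cc_def field_simps)
qed

lemma parity_lemma:
  fixes n :: nat and k m :: int
  assumes "2 * int n * k = (int n + 1) * (2 * m - 1)"
  shows "odd n"
proof (rule ccontr)
  assume "\<not> odd n"
  then have "odd (int n + 1)" by simp
  moreover have "odd (2 * m - 1)" by simp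
  ultimately have "odd ((int n + 1) * (2 * m - 1))" by simp
  with assms show False by (metis dvd_triv_left even_mult_iff)
qed

theorem corollary11:
  fixes n :: nat
  assumes "n \<ge> 1"
  shows "lap_pst (blowup2_verts (star_verts n)) (blowup2_adj (star_adj n)) (0, 0) (1, 0)
         \<longleftrightarrow> odd n"
proof
  let ?V = "blowup2_verts (star_verts n)"
  assume "lap_pst ?V (blowup2_adj (star_adj n)) (0, 0) (1, 0)"
  then obtain \<tau> :: real and \<gamma> where tp: "\<tau> > 0" and H: "\<forall>u\<in>?V.
        mat_exp ?V (\<lambda>x y. \<i> * of_real \<tau> * laplacian ?V (blowup2_adj (star_adj n)) x y) u (0,0) = \<gamma> * (if u = (1,0) then 1 else 0)"
    unfolding lap_pst_def by blast
  define z where "z = \<i> * complex_of_real \<tau>"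
  define e1 where "e1 = exp (2 * of_nat n * z)"
  define e2 where "e2 = exp ((2 * of_nat n + 2) * z)"
  have v00: "(0,0) \<in> ?V" and v01: "(0,1) \<in> ?V" using assms by (auto simp: blowup2_verts_def star_verts_def)
  have h1: "(1/2) * e1 + cc n + of_nat n * cc n * e2 = 0"
    using H[rule_format, OF v00] exp_col[OF v00, of z] unfolding z_def e1_def e2_def by (simp add: GV_def)
  have h2: "cc n - cc n * e2 = 0"
    using H[rule_format, OF v01] exp_col[OF v01, of z] unfolding z_def e1_def e2_def by (simp add: GV_def)
  have E2: "e2 = 1" using h2 cc_prop(2)[of n]
    by (metis eq_iff_diff_eq_0 mult.right_neutral mult_left_cancel)
  have "(1/2) * e1 + cc n * (of_nat n + 1) = 0" using h1 E2 by (simp add: algebra_simps)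
  then have "1 + e1 = 0" using cc_prop(1)[of n] by (simp add: field_simps)
  then have E1: "e1 = -1" by (metis add.commute eq_neg_iff_add_eq_0)
  have e1c: "e1 = cis (2 * real n * \<tau>)" unfolding e1_def z_def cis_conv_exp by (simp add: algebra_simps)
  have e2c: "e2 = cis ((2 * real n + 2) * \<tau>)" unfolding e2_def z_def cis_conv_exp by (simp add: algebra_simps)
  have c1: "cos (2 * real n * \<tau>) = -1" using arg_cong[OF e1c, of Re] E1 by simp
  have c2: "cos ((2 * real n + 2) * \<tau>) = 1" using arg_cong[OF e2c, of Re] E2 by simp
  obtain k :: int where k: "(2 * real n + 2) * \<tau> = of_int k * 2 * pi" using c2 cos_one_2pi_int by blast
  have "cos (2 * real n * \<tau> + pi) = 1" using c1 by simp
  then obtain m :: int where m: "2 * real n * \<tau> + pi = of_int m * 2 * pi" using cos_one_2pi_int by blast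
  have "real n * ((2 * real n + 2) * \<tau>) = (real n + 1) * (2 * real n * \<tau>)" by (simp add: algebra_simps)
  moreover have m': "2 * real n * \<tau> = of_int m * 2 * pi - pi" using m by linarith
  ultimately have "real n * (of_int k * 2 * pi) = (real n + 1) * (of_int m * 2 * pi - pi)" by (simp only: k m')
  then have "(2 * real n * of_int k) * pi = ((real n + 1) * (2 * of_int m - 1)) * pi" by (simp add: algebra_simps)
  then have "2 * real n * of_int k = (real n + 1) * (2 * of_int m - 1)" using pi_gt_zero by simp
  then have "real_of_int (2 * int n * k) = real_of_int ((int n + 1) * (2 * m - 1))" by simp
  then have "2 * int n * k = (int n + 1) * (2 * m - 1)" by (simp only: of_int_eq_iff)
  then show "odd n" by (rule parity_lemma)
next
  let ?V = "blowup2_verts (star_verts n)"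
  assume odd: "odd n"
  define \<tau> :: real where "\<tau> = pi / 2"
  define z where "z = \<i> * complex_of_real \<tau>"
  have e1c: "exp (2 * of_nat n * z) = cis (real n * pi)" unfolding z_def cis_conv_exp \<tau>_def by (simp add: algebra_simps)
  have e2c: "exp ((2 * of_nat n + 2) * z) = cis (real (n + 1) * pi)" unfolding z_def cis_conv_exp \<tau>_def by (simp add: algebra_simps)
  have E1: "exp (2 * of_nat n * z) = -1" unfolding e1c using odd by (simp add: cis.ctr complex_eq_iff)
  have E2: "exp ((2 * of_nat n + 2) * z) = 1" unfolding e2c cis.ctr cos_npi sin_npi using odd by (simp add: complex_eq_iff)
  have c: "cc n + of_nat n * cc n = 1/2" using cc_prop(1)[of n] by (simp add: algebra_simps)
  have ca: "cc n - 1/2 + of_nat n * cc n = 0"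
  proof -
    have "cc n - 1/2 + of_nat n * cc n = (cc n + of_nat n * cc n) - 1/2" by (simp add: algebra_simps)
    then show ?thesis by (simp only: c) simp
  qed
  have cb: "1/2 + cc n + of_nat n * cc n = 1"
  proof -
    have "1/2 + cc n + of_nat n * cc n = 1/2 + (cc n + of_nat n * cc n)" by (simp add: algebra_simps)
    then show ?thesis by (simp only: c) simp
  qed
  have "\<forall>u\<in>?V. mat_exp ?V (\<lambda>x y. \<i> * of_real \<tau> * laplacian ?V (blowup2_adj (star_adj n)) x y) u (0,0) = 1 * (if u = (1,0) then 1 else 0)"
  proof
    fix u assume u: "u \<in> ?V"
    show "mat_exp ?V (\<lambda>x y. \<i> * of_real \<tau> * laplacian ?V (blowup2_adj (star_adj n)) x y) u (0,0) = 1 * (if u = (1,0) then 1 else 0)"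
      using exp_col[OF u, of z] unfolding z_def[symmetric] E1 E2 using ca cb by (simp add: GV_def)
  qed
  moreover have "\<tau> > 0" unfolding \<tau>_def by simp
  ultimately show "lap_pst ?V (blowup2_adj (star_adj n)) (0, 0) (1, 0)"
    unfolding lap_pst_def by blast
qed

end
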